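(* There is an absolute constant $C>0$ such that the following holds. Let $U^*,S,p_{ijk},\widehat p_{ijk},\mathcal{W}_{ijk},\delta_{ijk}$ be as in the context, and let $U\in\mathbb{R}^{n\times r}$ be a fixed (non-random, or independent of $\delta$) matrix with unit-norm columns satisfying $|U_{il}|\le2\|(U^* )^i\|$ for all $i,l$. Let $\gamma\in(0,1]$, $i\in[n]$ and $q\in[r]$ be fixed. If $m\ge\frac{C}{\gamma^2}n\log(n)S^2$, then with probability at least $1-n^{-10}$, $$\Big|\sum_{j,k}\delta_{ijk}\mathcal{W}_{ijk}U_{jq}U^*_{jq}U_{kq}U^*_{kq}-\langle U_q,U^*_q\rangle^2\Big|\le\gamma .$$
   Context: $U^*\in\mathbb{R}^{n\times r}$ has orthonormal columns $U^*_l$ and rows $(U^* )^i$; $S=\sum_i\|(U^* )^i\|^{3/2}$; $p_{ijk}=\frac{\|(U^* )^i\|^{3/2}\|(U^* )^j\|^{3/2}+\|(U^* )^j\|^{3/2}\|(U^* )^k\|^{3/2}+\|(U^* )^k\|^{3/2}\|(U^* )^i\|^{3/2}}{3nS^2}$; $\widehat p_{ijk}=\min\{mp_{ijk},1\}$; $\mathcal{W}_{ijk}=1/\widehat p_{ijk}$ if $\widehat p_{ijk}>0$, else $0$; $\delta_{ijk}$ are independent Bernoulli$(\widehat p_{ijk})$ random variables. *)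

theory Defs
  imports "HOL-Probability.Probability"
begin

text \<open>Matrices are functions nat => nat => real; row index i < n, column index l < r.\<close>

definition rownorm :: "nat \<Rightarrow> (nat \<Rightarrow> nat \<Rightarrow> real) \<Rightarrow> nat \<Rightarrow> real" where
  "rownorm r Us i = sqrt (\<Sum>l<r. (Us i l)^2)"

definition Ssum :: "nat \<Rightarrow> nat \<Rightarrow> (nat \<Rightarrow> nat \<Rightarrow> real) \<Rightarrow> real" where
  "Ssum n r Us = (\<Sum>i<n. rownorm r Us i powr (3/2))"

definition pprob :: "nat \<Rightarrow> nat \<Rightarrow> (nat \<Rightarrow> nat \<Rightarrow> real) \<Rightarrow> nat \<Rightarrow> nat \<Rightarrow> nat \<Rightarrow> real" where
  "pprob n r Us i j k =
     (rownorm r Us i powr (3/2) * rownorm r Us j powr (3/2)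
      + rownorm r Us j powr (3/2) * rownorm r Us k powr (3/2)
      + rownorm r Us k powr (3/2) * rownorm r Us i powr (3/2))
     / (3 * real n * (Ssum n r Us)^2)"

definition phat :: "real \<Rightarrow> nat \<Rightarrow> nat \<Rightarrow> (nat \<Rightarrow> nat \<Rightarrow> real) \<Rightarrow> nat \<Rightarrow> nat \<Rightarrow> nat \<Rightarrow> real" where
  "phat m n r Us i j k = min (m * pprob n r Us i j k) 1"

definition Wgt :: "real \<Rightarrow> nat \<Rightarrow> nat \<Rightarrow> (nat \<Rightarrow> nat \<Rightarrow> real) \<Rightarrow> nat \<Rightarrow> nat \<Rightarrow> nat \<Rightarrow> real" where
  "Wgt m n r Us i j k = (if phat m n r Us i j k > 0 then 1 / phat m n r Us i j k else 0)"

definition delta_pmf :: "real \<Rightarrow> nat \<Rightarrow> nat \<Rightarrow> (nat \<Rightarrow> nat \<Rightarrow> real) \<Rightarrow> (nat \<times> nat \<times> nat \<Rightarrow> bool) pmf" where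
  "delta_pmf m n r Us = Pi_pmf ({..<n} \<times> {..<n} \<times> {..<n}) False
      (\<lambda>(i,j,k). bernoulli_pmf (phat m n r Us i j k))"

end

theory Submission imports Defs begin

lemma exp_quad_bound:
  fixes x :: real assumes "\<bar>x\<bar> \<le> 1" shows "exp x \<le> 1 + x + x^2"
proof (cases "x \<ge> 0")
  case True then show ?thesis using exp_bound[of x] assms by auto
next
  case False
  define y where "y = -x"
  have y: "0 \<le> y" "y \<le> 1" using False assms by (auto simp: y_def)
  have "1 + y \<le> exp y" by (rule exp_ge_add_one_self)
  have "(1+y) * (1 - y + y^2) = 1 + y^3" by (simp add: algebra_simps power2_eq_square power3_eq_cube)
  also have "\<dots> \<ge> 1" using y by simp
  finally have h: "1 \<le> (1+y) * (1 - y + y^2)" .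
  have pe: "1 - y + y^2 = (y - 1/2)^2 + 3/4" by (simp add: power2_eq_square algebra_simps)
  have pos: "0 < 1 - y + y^2" unfolding pe by (simp add: add_nonneg_pos)
  have "exp y * (1 - y + y^2) \<ge> 1" using h \<open>1 + y \<le> exp y\<close> pos
    by (smt (verit) mult_right_mono)
  hence "exp (-y) \<le> 1 - y + y^2" using pos by (simp add: exp_minus field_simps)
  thus ?thesis by (simp add: y_def)
qed

lemma bern_mgf:
  fixes p c W K l :: real
  assumes p: "0 \<le> p" "p \<le> 1" and K: "K > 0" and lK: "\<bar>l\<bar> * K \<le> 1"
    and cases: "c = 0 \<or> (p = 1 \<and> W = 1) \<or> (0 < p \<and> p < 1 \<and> W = 1/p \<and> \<bar>c\<bar> \<le> K * p)"
  shows "measure_pmf.expectation (bernoulli_pmf p) (\<lambda>v. exp (l * (c * ((if v then 1 else 0) * W - 1))))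
           \<le> exp (l^2 * \<bar>c\<bar> * K)"
proof -
  have E: "measure_pmf.expectation (bernoulli_pmf p) (\<lambda>v. exp (l * (c * ((if v then 1 else 0) * W - 1))))
        = exp (l * (c * (W - 1))) * p + exp (- (l * c)) * (1 - p)"
    using p by simp
  have rhs: "1 \<le> exp (l^2 * \<bar>c\<bar> * K)" using K by simp
  consider "c = 0" | "p = 1 \<and> W = 1" | "0 < p \<and> p < 1 \<and> W = 1/p \<and> \<bar>c\<bar> \<le> K * p" using cases by blast
  then show ?thesis
  proof cases
    case 1 then show ?thesis using E rhs by simp
  next
    case 2 then show ?thesis using E rhs by simp
  next
    case 3
    hence p0: "0 < p" "p < 1" and W: "W = 1/p" and cK: "\<bar>c\<bar> \<le> K * p" by auto
    define x1 where "x1 = l * (c * (W - 1))"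
    define x0 where "x0 = - (l * c)"
    have x1e: "x1 = l * c * (1 - p) / p" using p0 by (simp add: x1_def W field_simps)
    have lc: "\<bar>l * c\<bar> \<le> p"
    proof -
      have "\<bar>l * c\<bar> = \<bar>l\<bar> * \<bar>c\<bar>" by (simp add: abs_mult)
      also have "\<dots> \<le> \<bar>l\<bar> * (K * p)" using cK by (simp add: mult_left_mono)
      also have "\<dots> = (\<bar>l\<bar> * K) * p" by simp
      also have "\<dots> \<le> 1 * p" using lK p0 by (intro mult_right_mono) auto
      finally show ?thesis by simp
    qed
    have ax1: "\<bar>x1\<bar> \<le> 1"
    proof -
      have "\<bar>x1\<bar> = \<bar>l * c\<bar> * (1 - p) / p" using p0 by (simp add: x1e abs_mult)
      also have "\<dots> \<le> p * (1 - p) / p" using lc p0 by (intro divide_right_mono mult_right_mono) auto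
      also have "\<dots> = 1 - p" using p0 by simp
      finally show ?thesis using p0 by simp
    qed
    have ax0: "\<bar>x0\<bar> \<le> 1" using lc p0 by (simp add: x0_def)
    have "exp x1 * p + exp x0 * (1 - p) \<le> (1 + x1 + x1^2) * p + (1 + x0 + x0^2) * (1 - p)"
      using exp_quad_bound[OF ax1] exp_quad_bound[OF ax0] p0
      by (intro add_mono mult_right_mono) auto
    also have "\<dots> = 1 + (l*c)^2 * (1 - p) / p"
      using p0 by (simp add: x1e x0_def field_simps power2_eq_square)
    also have "\<dots> \<le> 1 + (l*c)^2 / p"
      using p0 by (intro add_left_mono divide_right_mono) (auto simp: mult_left_le)
    also have "(l*c)^2 / p \<le> l^2 * \<bar>c\<bar> * K"
    proof -
      have "(l*c)^2 / p = l^2 * \<bar>c\<bar> * (\<bar>c\<bar> / p)" by (simp add: power2_eq_square field_simps abs_mult_self_eq)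
      also have "\<bar>c\<bar> / p \<le> K" using cK p0 by (simp add: divide_le_eq mult.commute)
      hence "l^2 * \<bar>c\<bar> * (\<bar>c\<bar> / p) \<le> l^2 * \<bar>c\<bar> * K" by (intro mult_left_mono) auto
      finally show ?thesis .
    qed
    hence "1 + (l*c)^2 / p \<le> 1 + l^2 * \<bar>c\<bar> * K" by simp
    also have "\<dots> \<le> exp (l^2 * \<bar>c\<bar> * K)" by (rule exp_ge_add_one_self)
    finally show ?thesis using E by (simp add: x1_def x0_def)
  qed
qed

lemma mgf_sum:
  fixes A :: "'a set" and p c W :: "'a \<Rightarrow> real" and K l :: real
  assumes fin: "finite A" and p: "\<And>x. x \<in> A \<Longrightarrow> 0 \<le> p x \<and> p x \<le> 1"
    and K: "K > 0" and lK: "\<bar>l\<bar> * K \<le> 1"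
    and cases: "\<And>x. x \<in> A \<Longrightarrow> c x = 0 \<or> (p x = 1 \<and> W x = 1) \<or> (0 < p x \<and> p x < 1 \<and> W x = 1/p x \<and> \<bar>c x\<bar> \<le> K * p x)"
    and csum: "(\<Sum>x\<in>A. \<bar>c x\<bar>) \<le> 1"
  shows "measure_pmf.expectation (Pi_pmf A False (\<lambda>x. bernoulli_pmf (p x)))
           (\<lambda>\<delta>. exp (l * (\<Sum>x\<in>A. c x * ((if \<delta> x then 1 else 0) * W x - 1)))) \<le> exp (l^2 * K)"
proof -
  let ?f = "\<lambda>x v. exp (l * (c x * ((if v then 1 else 0) * W x - 1)))"
  have "(\<lambda>\<delta>. exp (l * (\<Sum>x\<in>A. c x * ((if \<delta> x then 1 else 0) * W x - 1)))) = (\<lambda>\<delta>. \<Prod>x\<in>A. ?f x (\<delta> x))"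
    using fin by (simp add: sum_distrib_left exp_sum)
  hence "measure_pmf.expectation (Pi_pmf A False (\<lambda>x. bernoulli_pmf (p x)))
           (\<lambda>\<delta>. exp (l * (\<Sum>x\<in>A. c x * ((if \<delta> x then 1 else 0) * W x - 1))))
        = (\<Prod>x\<in>A. measure_pmf.expectation (bernoulli_pmf (p x)) (?f x))"
    using fin by (simp only:) (rule expectation_prod_Pi_pmf[OF fin], auto intro: integrable_measure_pmf_finite)
  also have "\<dots> \<le> (\<Prod>x\<in>A. exp (l^2 * \<bar>c x\<bar> * K))"
    by (intro prod_mono conjI integral_nonneg_AE AE_pmfI bern_mgf[OF _ _ K lK] cases)
       (auto dest: p)
  also have "\<dots> = exp (l^2 * K * (\<Sum>x\<in>A. \<bar>c x\<bar>))"
    using fin by (simp add: exp_sum[symmetric] sum_distrib_left mult_ac)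
  also have "\<dots> \<le> exp (l^2 * K)"
    using csum K by (simp add: mult_left_le)
  finally show ?thesis .
qed

lemma tail_one:
  fixes M :: "'b pmf" and Z :: "'b \<Rightarrow> real" and l g B :: real
  assumes fM: "finite (set_pmf M)" and l: "l > 0" and E: "measure_pmf.expectation M (\<lambda>\<delta>. exp (l * Z \<delta>)) \<le> B"
  shows "measure_pmf.prob M {\<delta>. g < Z \<delta>} \<le> B / exp (l * g)"
proof -
  have "measure_pmf.prob M {\<delta>. g < Z \<delta>} \<le> measure_pmf.prob M {\<delta>\<in>space M. exp (l * g) \<le> exp (l * Z \<delta>)}"
    using l by (intro measure_pmf.finite_measure_mono) auto
  also have "\<dots> \<le> measure_pmf.expectation M (\<lambda>\<delta>. exp (l * Z \<delta>)) / exp (l * g)"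
    by (intro integral_Markov_inequality_measure[where A = "{}"]) (auto intro: integrable_measure_pmf_finite[OF fM])
  also have "\<dots> \<le> B / exp (l * g)" using E by (simp add: divide_right_mono)
  finally show ?thesis .
qed

lemma tail_both:
  fixes A :: "'a set" and p c W :: "'a \<Rightarrow> real" and K g :: real
  assumes fin: "finite A" and p: "\<And>x. x \<in> A \<Longrightarrow> 0 \<le> p x \<and> p x \<le> 1"
    and K: "K > 0"
    and cases: "\<And>x. x \<in> A \<Longrightarrow> c x = 0 \<or> (p x = 1 \<and> W x = 1) \<or> (0 < p x \<and> p x < 1 \<and> W x = 1/p x \<and> \<bar>c x\<bar> \<le> K * p x)"
    and csum: "(\<Sum>x\<in>A. \<bar>c x\<bar>) \<le> 1" and g: "0 < g" "g \<le> 1"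
  shows "measure_pmf.prob (Pi_pmf A False (\<lambda>x. bernoulli_pmf (p x)))
           {\<delta>. g < \<bar>\<Sum>x\<in>A. c x * ((if \<delta> x then 1 else 0) * W x - 1)\<bar>} \<le> 2 * exp (- (g^2 / (4*K)))"
proof -
  let ?M = "Pi_pmf A False (\<lambda>x. bernoulli_pmf (p x))"
  let ?Z = "\<lambda>\<delta>. \<Sum>x\<in>A. c x * ((if \<delta> x then 1 else 0) * W x - 1)"
  define l where "l = g / (2*K)"
  have l: "l > 0" using g K by (simp add: l_def)
  have lK: "\<bar>l\<bar> * K \<le> 1" using g K by (simp add: l_def)
  have lK': "\<bar>-l\<bar> * K \<le> 1" using lK by simp
  have fM: "finite (set_pmf ?M)"
    using fin by (simp add: set_Pi_pmf finite_PiE_dflt)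
  have E1: "measure_pmf.expectation ?M (\<lambda>\<delta>. exp (l * ?Z \<delta>)) \<le> exp (l^2 * K)"
    by (rule mgf_sum[OF fin p K lK cases csum]) auto
  have E2: "measure_pmf.expectation ?M (\<lambda>\<delta>. exp (l * (- ?Z \<delta>))) \<le> exp (l^2 * K)"
    using mgf_sum[OF fin p K lK' cases csum] by simp
  have key: "exp (l^2 * K) / exp (l * g) = exp (- (g^2 / (4*K)))"
  proof -
    have "l^2 * K - l * g = - (g^2 / (4*K))" using K by (simp add: l_def power2_eq_square field_simps)
    thus ?thesis by (simp add: exp_diff[symmetric])
  qed
  have T1: "measure_pmf.prob ?M {\<delta>. g < ?Z \<delta>} \<le> exp (- (g^2 / (4*K)))"
    using tail_one[OF fM l E1, of g] key by simp
  have T2: "measure_pmf.prob ?M {\<delta>. g < - ?Z \<delta>} \<le> exp (- (g^2 / (4*K)))"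
    using tail_one[OF fM l E2, of g] key by simp
  have "measure_pmf.prob ?M {\<delta>. g < \<bar>?Z \<delta>\<bar>} \<le> measure_pmf.prob ?M ({\<delta>. g < ?Z \<delta>} \<union> {\<delta>. g < - ?Z \<delta>})"
    by (intro measure_pmf.finite_measure_mono) auto
  also have "\<dots> \<le> measure_pmf.prob ?M {\<delta>. g < ?Z \<delta>} + measure_pmf.prob ?M {\<delta>. g < - ?Z \<delta>}"
    by (rule measure_Un_le) auto
  finally show ?thesis using T1 T2 by simp
qed

lemma sum_triple:
  fixes g :: "nat \<times> nat \<times> nat \<Rightarrow> real"
  shows "(\<Sum>x\<in>{..<n} \<times> {..<n} \<times> {..<n}. g x) = (\<Sum>a<n. \<Sum>j<n. \<Sum>k<n. g (a,j,k))"
  by (simp add: sum.cartesian_product)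

lemma sum_single:
  fixes f :: "nat \<Rightarrow> real"
  assumes "i < n" "\<And>a. a \<noteq> i \<Longrightarrow> f a = 0"
  shows "(\<Sum>a<n. f a) = f i"
proof -
  have "(\<Sum>a<n. f a) = f i + (\<Sum>a\<in>{..<n} - {i}. f a)"
    using assms(1) by (subst sum.remove[of _ i]) auto
  also have "(\<Sum>a\<in>{..<n} - {i}. f a) = 0" using assms(2) by (intro sum.neutral) auto
  finally show ?thesis by simp
qed

lemma rowbound:
  fixes u v rho :: real
  assumes "\<bar>u\<bar> \<le> 1" "\<bar>u\<bar> \<le> 2 * rho" "\<bar>v\<bar> \<le> rho"
  shows "\<bar>u * v\<bar> \<le> sqrt 2 * rho powr (3/2)"
proof -
  have r0: "0 \<le> rho" using assms by linarith
  have "(u * v)^2 = abs u * abs u * (abs v)^2" by (simp add: power2_eq_square)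
  also have "\<dots> \<le> 1 * (2*rho) * rho^2"
    using assms by (intro mult_mono power_mono) auto
  also have "\<dots> = (sqrt 2 * rho powr (3/2))^2"
  proof -
    have e1: "rho powr (3/2) * rho powr (3/2) = rho powr 3" by (simp add: powr_add[symmetric])
    have e2: "rho powr 3 = rho^3"
    proof (cases "rho = 0")
      case False thus ?thesis using r0 by (simp add: powr_realpow)
    qed simp
    have "1 * (2*rho) * rho^2 = 2 * rho^3" by (simp add: power2_eq_square power3_eq_cube)
    also have "\<dots> = 2 * (rho powr (3/2) * rho powr (3/2))" using e1 e2 by simp
    also have "\<dots> = (sqrt 2 * rho powr (3/2))^2" by (simp add: power_mult_distrib) (simp add: power2_eq_square)
    finally show ?thesis .
  qed
  finally have "(u * v)^2 \<le> (sqrt 2 * rho powr (3/2))^2" .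
  hence h: "\<bar>u * v\<bar>^2 \<le> (sqrt 2 * rho powr (3/2))^2" by simp
  have "0 \<le> sqrt 2 * rho powr (3/2)" by simp
  thus ?thesis using h by (rule power2_le_imp_le[rotated])
qed

theorem mainTheorem5:
  "\<exists>C::real. C > 0 \<and>
    (\<forall>(n::nat) (r::nat) (Us::nat \<Rightarrow> nat \<Rightarrow> real) (U::nat \<Rightarrow> nat \<Rightarrow> real)
       (\<gamma>::real) (i::nat) (q::nat) (m::real).
      (\<forall>l<r. \<forall>l'<r. (\<Sum>a<n. Us a l * Us a l') = (if l = l' then 1 else 0)) \<longrightarrow>
      (\<forall>l<r. (\<Sum>a<n. (U a l)^2) = 1) \<longrightarrow>
      (\<forall>a<n. \<forall>l<r. \<bar>U a l\<bar> \<le> 2 * rownorm r Us a) \<longrightarrow>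
      0 < \<gamma> \<longrightarrow> \<gamma> \<le> 1 \<longrightarrow> i < n \<longrightarrow> q < r \<longrightarrow>
      m \<ge> C / \<gamma>^2 * real n * ln (real n) * (Ssum n r Us)^2 \<longrightarrow>
      measure_pmf.prob (delta_pmf m n r Us)
        {\<delta>. \<bar>(\<Sum>j<n. \<Sum>k<n. (if \<delta> (i,j,k) then 1 else 0) * Wgt m n r Us i j k
                 * U j q * Us j q * U k q * Us k q)
              - (\<Sum>a<n. U a q * Us a q)^2\<bar> \<le> \<gamma>}
        \<ge> 1 - real n powr (-10))"
proof (rule exI[of _ 300], rule conjI, simp, intro allI impI)
  fix n r :: nat and Us U :: "nat \<Rightarrow> nat \<Rightarrow> real" and \<gamma> m :: real and i q :: nat
  assume orth: "\<forall>l<r. \<forall>l'<r. (\<Sum>a<n. Us a l * Us a l') = (if l = l' then 1 else 0)"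
    and unit: "\<forall>l<r. (\<Sum>a<n. (U a l)^2) = 1"
    and bnd: "\<forall>a<n. \<forall>l<r. \<bar>U a l\<bar> \<le> 2 * rownorm r Us a"
    and g0: "0 < \<gamma>" and g1: "\<gamma> \<le> 1" and iN: "i < n" and qr: "q < r"
    and mC: "m \<ge> 300 / \<gamma>^2 * real n * ln (real n) * (Ssum n r Us)^2"
  let ?M = "delta_pmf m n r Us"
  let ?E = "{\<delta>. \<bar>(\<Sum>j<n. \<Sum>k<n. (if \<delta> (i,j,k) then 1 else 0) * Wgt m n r Us i j k
                 * U j q * Us j q * U k q * Us k q)
              - (\<Sum>a<n. U a q * Us a q)^2\<bar> \<le> \<gamma>}"
  show "measure_pmf.prob ?M ?E \<ge> 1 - real n powr (-10)"
  proof (cases "n = 1")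
    case True then show ?thesis by simp
  next
    case False
    hence n2: "n \<ge> 2" using iN by linarith
    define L where "L = ln (real n)"
    have L: "L > 0" using n2 by (simp add: L_def)
    define rho where "rho a = rownorm r Us a" for a
    define S where "S = Ssum n r Us"
    define P where "P a = rho a powr (3/2)" for a
    have rho0: "rho a \<ge> 0" for a by (simp add: rho_def rownorm_def sum_nonneg)
    have P0: "P a \<ge> 0" for a by (simp add: P_def)
    have col: "(\<Sum>a<n. (Us a q)^2) = 1" using orth qr by (simp add: power2_eq_square)
    have Usb: "\<bar>Us a q\<bar> \<le> rho a" for a
    proof -
      have "(Us a q)^2 \<le> (\<Sum>l<r. (Us a l)^2)" using qr by (intro member_le_sum) auto
      hence "sqrt ((Us a q)^2) \<le> rho a" unfolding rho_def rownorm_def by (rule real_sqrt_le_mono)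
      thus ?thesis by simp
    qed
    have Ub: "\<bar>U a q\<bar> \<le> 1" if "a < n" for a
    proof -
      have "(U a q)^2 \<le> (\<Sum>a<n. (U a q)^2)" using that by (intro member_le_sum) auto
      hence "(U a q)^2 \<le> 1" using unit qr by simp
      thus ?thesis by (simp add: abs_square_le_1)
    qed
    have S0: "S > 0"
    proof -
      have "\<exists>a<n. Us a q \<noteq> 0"
      proof (rule ccontr)
        assume "\<not> (\<exists>a<n. Us a q \<noteq> 0)"
        hence "\<forall>a<n. Us a q = 0" by blast
        hence "(\<Sum>a<n. (Us a q)^2) = 0" by simp
        thus False using col by simp
      qed
      then obtain a where a: "a < n" "Us a q \<noteq> 0" by blast
      have "rho a > 0" using Usb[of a] a(2) by linarith
      hence "P a > 0" by (simp add: P_def)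
      have "P a \<le> (\<Sum>b<n. P b)" using a(1) P0 by (intro member_le_sum) auto
      moreover have "S = (\<Sum>b<n. P b)" by (simp add: S_def Ssum_def P_def rho_def)
      ultimately show ?thesis using \<open>P a > 0\<close> by linarith
    qed
    have m0: "m > 0"
    proof -
      have "0 < 300 / \<gamma>^2 * real n * ln (real n) * (Ssum n r Us)^2"
        using g0 n2 L S0 by (simp add: L_def S_def)
      thus ?thesis using mC by linarith
    qed
    define K where "K = 6 * real n * S^2 / m"
    have K0: "K > 0" using n2 S0 m0 by (simp add: K_def)
    have KL: "K \<le> \<gamma>^2 / (50 * L)"
    proof -
      have m': "m \<ge> 300 / \<gamma>^2 * real n * L * S^2" using mC by (simp add: L_def S_def)
      have pos: "0 < 300 / \<gamma>^2 * real n * L * S^2" using g0 n2 L S0 by simp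
      have "K \<le> 6 * real n * S^2 / (300 / \<gamma>^2 * real n * L * S^2)"
        unfolding K_def using m' pos n2 S0 m0 L g0 by (intro divide_left_mono mult_pos_pos) auto
      also have "\<dots> = \<gamma>^2 / (50 * L)" using g0 n2 L S0 by (simp add: field_simps power2_eq_square)
      finally show ?thesis .
    qed
    define c where "c j k = U j q * Us j q * U k q * Us k q" for j k
    define aa where "aa j = \<bar>U j q * Us j q\<bar>" for j
    have aab: "aa j \<le> sqrt 2 * P j" if "j < n" for j
      unfolding aa_def P_def using Ub[OF that] bnd that qr Usb[of j] by (intro rowbound) (auto simp: rho_def)
    have cb: "\<bar>c j k\<bar> \<le> 2 * (P j * P k)" if "j < n" "k < n" for j k
    proof -
      have "\<bar>c j k\<bar> = aa j * aa k" by (simp add: c_def aa_def abs_mult)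
      also have "\<dots> \<le> (sqrt 2 * P j) * (sqrt 2 * P k)"
        using aab that P0[of j] by (intro mult_mono) (auto simp: aa_def)
      also have "\<dots> = 2 * (P j * P k)" by simp
      finally show ?thesis .
    qed
    have pp: "P j * P k / (3 * real n * S^2) \<le> pprob n r Us i j k" for j k
    proof -
      have "pprob n r Us i j k = (P i * P j + P j * P k + P k * P i) / (3 * real n * S^2)"
        by (simp add: pprob_def P_def rho_def S_def)
      moreover have "P j * P k \<le> P i * P j + P j * P k + P k * P i"
        using P0[of i] P0[of j] P0[of k] by (simp add: add_increasing add_increasing2)
      ultimately show ?thesis using n2 S0 by (simp add: divide_right_mono)
    qed
    have cpp: "\<bar>c j k\<bar> \<le> K * (m * pprob n r Us i j k)" if "j < n" "k < n" for j k
    proof -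
      have "\<bar>c j k\<bar> \<le> 2 * (P j * P k)" by (rule cb[OF that])
      also have "\<dots> = 6 * real n * S^2 * (P j * P k / (3 * real n * S^2))" using n2 S0 by simp
      also have "\<dots> \<le> 6 * real n * S^2 * pprob n r Us i j k" using pp by (intro mult_left_mono) auto
      also have "\<dots> = K * (m * pprob n r Us i j k)" using m0 by (simp add: K_def)
      finally show ?thesis .
    qed
    define A where "A = {..<n} \<times> {..<n} \<times> {..<n}"
    define pf where "pf = (\<lambda>(a::nat,j::nat,k::nat). phat m n r Us a j k)"
    define cf where "cf = (\<lambda>(a::nat,j::nat,k::nat). if a = i then c j k else 0)"
    define Wf where "Wf = (\<lambda>(a::nat,j::nat,k::nat). Wgt m n r Us a j k)"
    have Meq: "?M = Pi_pmf A False (\<lambda>x. bernoulli_pmf (pf x))"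
      unfolding delta_pmf_def A_def pf_def by (intro Pi_pmf_cong) auto
    have finA: "finite A" by (simp add: A_def)
    have pfA: "0 \<le> pf x \<and> pf x \<le> 1" if "x \<in> A" for x
    proof -
      obtain a j k where x: "x = (a,j,k)" by (cases x) auto
      have "0 \<le> pprob n r Us a j k"
        unfolding pprob_def by (intro divide_nonneg_nonneg add_nonneg_nonneg mult_nonneg_nonneg) auto
      hence "0 \<le> m * pprob n r Us a j k" using m0 by simp
      thus ?thesis by (simp add: x pf_def phat_def)
    qed
    have casesA: "cf x = 0 \<or> (pf x = 1 \<and> Wf x = 1) \<or> (0 < pf x \<and> pf x < 1 \<and> Wf x = 1/pf x \<and> \<bar>cf x\<bar> \<le> K * pf x)"
      if "x \<in> A" for x
    proof -
      obtain a j k where x: "x = (a,j,k)" by (cases x) auto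
      have jk: "j < n" "k < n" using that by (auto simp: x A_def)
      show ?thesis
      proof (cases "a = i")
        case False thus ?thesis by (simp add: x cf_def)
      next
        case True
        consider "m * pprob n r Us i j k \<ge> 1" | "m * pprob n r Us i j k \<le> 0"
          | "0 < m * pprob n r Us i j k \<and> m * pprob n r Us i j k < 1" by linarith
        thus ?thesis
        proof cases
          case 1 thus ?thesis by (simp add: x True pf_def Wf_def Wgt_def phat_def)
        next
          case 2
          have "\<bar>c j k\<bar> \<le> 0" using cpp[OF jk] 2 K0 by (smt (verit) mult_nonneg_nonpos)
          thus ?thesis by (simp add: x True cf_def)
        next
          case 3 thus ?thesis using cpp[OF jk]
            by (simp add: x True pf_def Wf_def Wgt_def phat_def cf_def)
        qed
      qed
    qed
    have csumA: "(\<Sum>x\<in>A. \<bar>cf x\<bar>) \<le> 1"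
    proof -
      have "(\<Sum>x\<in>A. \<bar>cf x\<bar>) = (\<Sum>j<n. \<Sum>k<n. \<bar>c j k\<bar>)"
        unfolding A_def sum_triple by (subst sum_single[OF iN]) (auto simp: cf_def)
      also have "\<dots> = (\<Sum>j<n. aa j)^2"
        by (simp add: power2_eq_square sum_product c_def aa_def abs_mult mult_ac)
      also have "\<dots> \<le> (\<Sum>j<n. \<bar>U j q\<bar>^2) * (\<Sum>j<n. \<bar>Us j q\<bar>^2)"
        unfolding aa_def abs_mult by (rule Cauchy_Schwarz_ineq_sum)
      also have "\<dots> = 1" using unit qr col by simp
      finally show ?thesis .
    qed
    have tail: "measure_pmf.prob ?M {\<delta>. \<gamma> < \<bar>\<Sum>x\<in>A. cf x * ((if \<delta> x then 1 else 0) * Wf x - 1)\<bar>}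
          \<le> 2 * exp (- (\<gamma>^2 / (4*K)))"
      unfolding Meq by (rule tail_both[OF finA pfA K0 casesA csumA g0 g1])
    have Zeq: "(\<Sum>x\<in>A. cf x * ((if \<delta> x then 1 else 0) * Wf x - 1)) =
       (\<Sum>j<n. \<Sum>k<n. (if \<delta> (i,j,k) then 1 else 0) * Wgt m n r Us i j k
                 * U j q * Us j q * U k q * Us k q) - (\<Sum>a<n. U a q * Us a q)^2" for \<delta>
    proof -
      have "(\<Sum>x\<in>A. cf x * ((if \<delta> x then 1 else 0) * Wf x - 1)) =
            (\<Sum>j<n. \<Sum>k<n. c j k * ((if \<delta> (i,j,k) then 1 else 0) * Wgt m n r Us i j k - 1))"
        unfolding A_def sum_triple by (subst sum_single[OF iN]) (auto simp: cf_def Wf_def)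
      also have "\<dots> = (\<Sum>j<n. \<Sum>k<n. (if \<delta> (i,j,k) then 1 else 0) * Wgt m n r Us i j k
                 * U j q * Us j q * U k q * Us k q) - (\<Sum>j<n. \<Sum>k<n. c j k)"
        by (simp add: right_diff_distrib sum_subtractf c_def mult_ac)
      also have "(\<Sum>j<n. \<Sum>k<n. c j k) = (\<Sum>a<n. U a q * Us a q)^2"
        by (simp add: power2_eq_square sum_product c_def mult_ac)
      finally show ?thesis .
    qed
    have compl: "?E = UNIV - {\<delta>. \<gamma> < \<bar>\<Sum>x\<in>A. cf x * ((if \<delta> x then 1 else 0) * Wf x - 1)\<bar>}"
      using Zeq by auto
    have "measure_pmf.prob ?M ?E = 1 - measure_pmf.prob ?M {\<delta>. \<gamma> < \<bar>\<Sum>x\<in>A. cf x * ((if \<delta> x then 1 else 0) * Wf x - 1)\<bar>}"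
      unfolding compl by (subst measure_pmf.prob_compl[symmetric]) auto
    moreover have "2 * exp (- (\<gamma>^2 / (4*K))) \<le> real n powr (-10)"
    proof -
      have "\<gamma>^2 / (4*K) \<ge> \<gamma>^2 / (4 * (\<gamma>^2 / (50 * L)))"
        using KL K0 g0 by (intro divide_left_mono mult_pos_pos) auto
      also have "\<gamma>^2 / (4 * (\<gamma>^2 / (50 * L))) = 25/2 * L" using g0 L by (simp add: field_simps)
      finally have h: "\<gamma>^2 / (4*K) \<ge> 11 * L" using L by linarith
      have "exp (- (\<gamma>^2 / (4*K))) \<le> exp (-11 * L)" using h by simp
      also have "exp (-11 * L) = real n powr (-10) * real n powr (-1)"
        using n2 by (simp add: L_def powr_def exp_add[symmetric])
      also have "real n powr (-1) = 1 / real n" using n2 by (simp add: powr_minus_divide)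
      finally have e: "exp (- (\<gamma>^2 / (4*K))) \<le> real n powr (-10) * (1 / real n)" .
      have "2 * exp (- (\<gamma>^2 / (4*K))) \<le> 2 * (real n powr (-10) * (1 / real n))" using e by linarith
      also have "\<dots> = real n powr (-10) * (2 / real n)" by simp
      also have "\<dots> \<le> real n powr (-10) * 1" using n2 by (intro mult_left_mono) auto
      finally show ?thesis by simp
    qed
    ultimately show ?thesis using tail by linarith
  qed
qed

end
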